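(* Let $a$ and $b$ be coprime odd integers and let $\beta$ be a non-negative integer. Then $EG_{(a,b)}(\beta)\neq\emptyset$ if and only if $\beta\in\{0,1\}$; equivalently, $EG_{(a,b)}(\beta)=\emptyset$ if and only if $\beta\geq 2$.
   Context: For coprime nonzero integers $a,b$ and an integer $\beta\geq0$, $EG_{(a,b)}(\beta)$ is the set of positive integers $d$ such that $2^\beta d\mid(a^k+b^k)$ for some even integer $k\geq 2$. *)

theory Defs
  imports Main
begin

definition EG :: "int \<Rightarrow> int \<Rightarrow> nat \<Rightarrow> nat set" where
  "EG a b \<beta> = {d. d > 0 \<and> (\<exists>k::nat. even k \<and> k \<ge> 2 \<and>
       (2 ^ \<beta> * int d) dvd (a ^ k + b ^ k))}"

end

theory Submission
  imports Defs
begin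

lemma odd_pow_mod4:
  fixes a :: int and k :: nat
  assumes "odd a" "even k"
  shows "a ^ k mod 4 = 1"
proof -
  obtain m where k: "k = 2 * m" using assms(2) by blast
  obtain c where a: "a = 2 * c + 1" using assms(1) oddE by blast
  have "a^2 = 4 * (c^2 + c) + 1" unfolding a by (simp add: power2_eq_square algebra_simps)
  moreover have "\<And>x::int. (4*x+1) mod 4 = 1" by presburger
  ultimately have sq: "a^2 mod 4 = 1" by metis
  have "a ^ k = (a^2)^m" by (simp add: k power_mult)
  hence "a ^ k mod 4 = ((a^2 mod 4)^m) mod 4" by (simp only: power_mod)
  thus ?thesis using sq by simp
qed

theorem theorem2p20:
  fixes a b :: int and \<beta> :: nat
  assumes "coprime a b" and "odd a" and "odd b"
  shows "EG a b \<beta> \<noteq> {} \<longleftrightarrow> \<beta> \<in> {0, 1}"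
proof
  assume "EG a b \<beta> \<noteq> {}"
  then obtain d k where k: "even k" and dv: "(2 ^ \<beta> * int d) dvd (a ^ k + b ^ k)"
    unfolding EG_def by blast
  show "\<beta> \<in> {0, 1}"
  proof (rule ccontr)
    assume "\<beta> \<notin> {0, 1}"
    hence "\<beta> \<ge> 2" by auto
    hence "(4::int) dvd 2 ^ \<beta>"
    proof -
      have "(2::int)^2 dvd 2^\<beta>" using \<open>\<beta> \<ge> 2\<close> by (rule le_imp_power_dvd)
      thus ?thesis by simp
    qed
    hence "(4::int) dvd 2 ^ \<beta> * int d" by (rule dvd_mult2)
    hence "(4::int) dvd a ^ k + b ^ k" using dv by (rule dvd_trans)
    moreover have "(a ^ k + b ^ k) mod 4 = 2"
    proof -
      have "(a ^ k + b ^ k) mod 4 = (a^k mod 4 + b^k mod 4) mod 4" by (rule mod_add_eq[symmetric])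
      thus ?thesis using odd_pow_mod4[OF assms(2) k] odd_pow_mod4[OF assms(3) k] by simp
    qed
    ultimately show False by simp
  qed
next
  assume b: "\<beta> \<in> {0, 1}"
  have "even (a^2 + b^2)" using assms by simp
  hence "(2 ^ \<beta> * int 1) dvd (a ^ 2 + b ^ 2)" using b by auto
  hence "1 \<in> EG a b \<beta>" unfolding EG_def by (intro CollectI conjI exI[of _ 2]) auto
  thus "EG a b \<beta> \<noteq> {}" by blast
qed

end
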